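(* Let $f_1,\dots,f_n:\mathbb{R}^d\to\mathbb{R}$ be such that each $f_i$ is $L_i$-smooth and $f_i^*=\min_xf_i(x)$ exists; let $x_i$ be a stationary point of $f_i$. Let $\alpha\in(0,1)$, $\omega\ge0$, $T_i(x)=\alpha x+(1-\alpha)x_i$, $\tilde f(x)=\frac1n\sum_if_i(T_i(x))$, $\overline{L}=\frac1n\sum_iL_i$, $f^*=\frac1n\sum_if_i^*$. Consider distributed compressed gradient descent on $\tilde f$: $x^{t+1}=x^t-\gamma\frac1n\sum_{i=1}^n\mathcal{C}_i^t(\alpha\nabla f_i(T_i(x^t)))$, with $\mathcal{C}_i^t\in\mathbb{B}^d(\omega)$ drawn independently across $i,t$. Let $\gamma=\gamma_0\frac{1}{\alpha^2}$ with $0<\gamma_0$ such that $\gamma\leq\frac{1}{\overline{L}\alpha^2}$, and let $\Delta_0=\sup_{\alpha'\in(0,1)}(\tilde f_{\alpha'}(x^0)-f^* )$ (assumed finite), where $\tilde f_{\alpha'}$ denotes $\tilde f$ with $\alpha$ replaced by $\alpha'$. Then for all $k\geq1$ \[\min_{0\leq t\leq k-1}\mathbb{E}\|\nabla\tilde f(x^t)\|^2\leq\alpha^2\frac{2\left(1+\frac{2\overline{L}\omega\gamma_0^2\max_iL_i}{n}\right)^k}{\gamma_0k}\Delta_0.\]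
   Context: A (random) operator $\mathcal{C}$ belongs to $\mathbb{B}^d(\omega)$ if $\mathbb{E}[\mathcal{C}(x)] = x$ and $\mathbb{E}\|\mathcal{C}(x)-x\|^2\leq\omega\|x\|^2$ for all $x$. A differentiable $g$ is $L$-smooth if $\|\nabla g(x)-\nabla g(y)\|\leq L\|x-y\|$ for all $x,y$. *)

theory Defs
  imports "HOL-Analysis.Analysis" "HOL-Probability.Probability"
begin

definition gradient :: "(real^'d \<Rightarrow> real) \<Rightarrow> real^'d \<Rightarrow> real^'d" where
  "gradient f x = (THE D. GDERIV f x :> D)"

definition L_smooth :: "real \<Rightarrow> (real^'d \<Rightarrow> real) \<Rightarrow> bool" where
  "L_smooth L g \<longleftrightarrow> (\<forall>x. g differentiable (at x)) \<and>
     (\<forall>x y. norm (gradient g x - gradient g y) \<le> L * norm (x - y))"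

text \<open>Random operator C (sample point s, input x) belongs to B^d(omega) w.r.t. probability space M.\<close>
definition in_B :: "'a measure \<Rightarrow> real \<Rightarrow> ('a \<Rightarrow> real^'d \<Rightarrow> real^'d) \<Rightarrow> bool" where
  "in_B M \<omega> C \<longleftrightarrow> (\<forall>x. integrable M (\<lambda>s. C s x) \<and> integral\<^sup>L M (\<lambda>s. C s x) = x \<and>
     integrable M (\<lambda>s. (norm (C s x - x))\<^sup>2) \<and>
     integral\<^sup>L M (\<lambda>s. (norm (C s x - x))\<^sup>2) \<le> \<omega> * (norm x)\<^sup>2)"

definition Tmap :: "real \<Rightarrow> real^'d \<Rightarrow> real^'d \<Rightarrow> real^'d" where
  "Tmap \<alpha> xi x = \<alpha> *\<^sub>R x + (1 - \<alpha>) *\<^sub>R xi"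

definition ftilde :: "nat \<Rightarrow> (nat \<Rightarrow> real^'d \<Rightarrow> real) \<Rightarrow> (nat \<Rightarrow> real^'d) \<Rightarrow> real \<Rightarrow> real^'d \<Rightarrow> real" where
  "ftilde n f xs \<alpha> x = (1 / real n) * (\<Sum>i<n. f i (Tmap \<alpha> (xs i) x))"

text \<open>DCGD iterates. The compressor C_i^t is Q i t (xi i t s): a jointly measurable
  operator Q i t driven by the random seed xi i t.\<close>
primrec dcgd :: "nat \<Rightarrow> (nat \<Rightarrow> real^'d \<Rightarrow> real) \<Rightarrow> (nat \<Rightarrow> real^'d) \<Rightarrow> real \<Rightarrow> real \<Rightarrow>
    (nat \<Rightarrow> nat \<Rightarrow> 'b \<Rightarrow> real^'d \<Rightarrow> real^'d) \<Rightarrow> (nat \<Rightarrow> nat \<Rightarrow> 'a \<Rightarrow> 'b) \<Rightarrow> real^'d \<Rightarrow>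
    nat \<Rightarrow> 'a \<Rightarrow> real^'d" where
  "dcgd n f xs \<alpha> \<gamma> Q \<xi> x0 0 s = x0"
| "dcgd n f xs \<alpha> \<gamma> Q \<xi> x0 (Suc t) s =
     dcgd n f xs \<alpha> \<gamma> Q \<xi> x0 t s - \<gamma> *\<^sub>R ((1 / real n) *\<^sub>R
       (\<Sum>i<n. Q i t (\<xi> i t s) (\<alpha> *\<^sub>R gradient (f i) (Tmap \<alpha> (xs i) (dcgd n f xs \<alpha> \<gamma> Q \<xi> x0 t s)))))"

end

theory Submission
  imports Defs
begin


lemma linear_inner_repr:
  fixes D :: "real^'d \<Rightarrow> real"
  assumes "linear D"
  shows "D = (\<lambda>h. h \<bullet> (\<Sum>b\<in>Basis. D b *\<^sub>R b))"
proof
  fix h :: "real^'d"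
  have "D h = D (\<Sum>b\<in>Basis. (h \<bullet> b) *\<^sub>R b)" by (simp add: euclidean_representation)
  also have "\<dots> = (\<Sum>b\<in>Basis. (h \<bullet> b) * D b)"
    using assms by (simp add: linear_sum linear_scale)
  also have "\<dots> = h \<bullet> (\<Sum>b\<in>Basis. D b *\<^sub>R b)"
    by (simp add: inner_sum_right mult.commute)
  finally show "D h = h \<bullet> (\<Sum>b\<in>Basis. D b *\<^sub>R b)" .
qed

lemma gderiv_unique:
  assumes "GDERIV f x :> D1" "GDERIV f x :> D2" shows "D1 = D2"
proof -
  have "(\<lambda>h. h \<bullet> D1) = (\<lambda>h. h \<bullet> D2)"
    using assms unfolding gderiv_def by (rule has_derivative_unique)
  then have "(D1 - D2) \<bullet> D1 = (D1 - D2) \<bullet> D2" by (rule fun_cong)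
  then have "(D1 - D2) \<bullet> (D1 - D2) = 0" by (simp add: inner_diff_right)
  then show ?thesis by simp
qed

lemma gradient_eqI:
  fixes f :: "real^'d \<Rightarrow> real"
  assumes "GDERIV f x :> D" shows "gradient f x = D"
  unfolding gradient_def
  by (rule the_equality[where P="\<lambda>D. GDERIV f x :> D", OF assms]) (rule gderiv_unique[OF _ assms])

lemma gradient_works:
  fixes f :: "real^'d \<Rightarrow> real"
  assumes "f differentiable (at x)"
  shows "GDERIV f x :> gradient f x"
proof -
  obtain D where D: "(f has_derivative D) (at x)" using assms unfolding differentiable_def by blast
  then have "linear D" using has_derivative_linear by blast
  then have "D = (\<lambda>h. h \<bullet> (\<Sum>b\<in>Basis. D b *\<^sub>R b))" by (rule linear_inner_repr)
  then have "GDERIV f x :> (\<Sum>b\<in>Basis. D b *\<^sub>R b)"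
    using D unfolding gderiv_def by simp
  moreover from this have "gradient f x = (\<Sum>b\<in>Basis. D b *\<^sub>R b)" by (rule gradient_eqI)
  ultimately show ?thesis by simp
qed

lemma L_smooth_nonneg:
  assumes "L_smooth L (g :: real^'d \<Rightarrow> real)" shows "L \<ge> 0"
proof -
  obtain b :: "real^'d" where b: "b \<in> Basis" using nonempty_Basis by blast
  define y where "y = b"
  have y: "y \<noteq> 0" using b Basis_zero y_def by blast
  have "norm (gradient g y - gradient g 0) \<le> L * norm (y - 0)" using assms unfolding L_smooth_def by blast
  then have "0 \<le> L * norm y" using norm_ge_zero[of "gradient g y - gradient g 0"] by (simp del: norm_ge_zero)
  moreover have "norm y > 0" using y by simp
  ultimately show ?thesis by (simp add: zero_le_mult_iff)
qed


lemma descent: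
  fixes g :: "real^'d \<Rightarrow> real"
  assumes "L_smooth L g"
  shows "g y \<le> g x + (y - x) \<bullet> gradient g x + L / 2 * (norm (y - x))\<^sup>2"
proof -
  define h where "h = y - x"
  define \<phi> where "\<phi> t = g (x + t *\<^sub>R h) - t * (h \<bullet> gradient g x) - L / 2 * t\<^sup>2 * (norm h)\<^sup>2" for t
  have der: "(\<phi> has_real_derivative (h \<bullet> gradient g (x + t *\<^sub>R h) - h \<bullet> gradient g x - L * t * (norm h)\<^sup>2)) (at t)" for t
  proof -
    have G: "(g has_derivative (\<lambda>k. k \<bullet> gradient g (x + t *\<^sub>R h))) (at (x + t *\<^sub>R h))"
      using gradient_works assms unfolding L_smooth_def gderiv_def by blast
    have P: "((\<lambda>t. x + t *\<^sub>R h) has_derivative (\<lambda>s. s *\<^sub>R h)) (at t)"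
      by (intro derivative_eq_intros) auto
    have "((\<lambda>t. g (x + t *\<^sub>R h)) has_derivative (\<lambda>s. (s *\<^sub>R h) \<bullet> gradient g (x + t *\<^sub>R h))) (at t)"
      using has_derivative_compose[OF P G] by (simp add: o_def)
    then have "((\<lambda>t. g (x + t *\<^sub>R h)) has_real_derivative (h \<bullet> gradient g (x + t *\<^sub>R h))) (at t)"
      by (simp add: has_field_derivative_def mult.commute[of _ "h \<bullet> _"])
    moreover have "((\<lambda>t. t * (h \<bullet> gradient g x)) has_real_derivative (h \<bullet> gradient g x)) (at t)"
      using DERIV_cmult_Id[of "h \<bullet> gradient g x" t] by (simp add: mult.commute[of _ "h \<bullet> _"])
    moreover have "((\<lambda>t. L / 2 * t\<^sup>2 * (norm h)\<^sup>2) has_real_derivative (L * t * (norm h)\<^sup>2)) (at t)"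
      by (auto intro!: derivative_eq_intros simp: power2_eq_square)
    ultimately show ?thesis unfolding \<phi>_def
      by (intro DERIV_diff)
  qed
  have "\<phi> 1 \<le> \<phi> 0"
  proof (rule DERIV_nonpos_imp_nonincreasing[of 0 1])
    fix t :: real assume t: "0 \<le> t" "t \<le> 1"
    have "h \<bullet> gradient g (x + t *\<^sub>R h) - h \<bullet> gradient g x = h \<bullet> (gradient g (x + t *\<^sub>R h) - gradient g x)"
      by (simp add: inner_diff_right)
    also have "\<dots> \<le> norm h * norm (gradient g (x + t *\<^sub>R h) - gradient g x)"
      by (rule norm_cauchy_schwarz)
    also have "\<dots> \<le> norm h * (L * norm (x + t *\<^sub>R h - x))"
    proof (rule mult_left_mono)
      show "norm (gradient g (x + t *\<^sub>R h) - gradient g x) \<le> L * norm (x + t *\<^sub>R h - x)"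
        using assms unfolding L_smooth_def by blast
    qed simp
    also have "\<dots> = L * t * (norm h)\<^sup>2" using t by (simp add: power2_eq_square)
    finally have "h \<bullet> gradient g (x + t *\<^sub>R h) - h \<bullet> gradient g x - L * t * (norm h)\<^sup>2 \<le> 0" by simp
    then show "\<exists>y. (\<phi> has_real_derivative y) (at t) \<and> y \<le> 0"
      using der[of t] by blast
  qed simp
  moreover have "x + 1 *\<^sub>R h = y" by (simp add: h_def)
  ultimately have "g y - (y - x) \<bullet> gradient g x - L / 2 * (norm (y - x))\<^sup>2 \<le> g x"
    unfolding \<phi>_def h_def by simp
  then show ?thesis by linarith
qed



lemma grad_sq_bound:
  fixes g :: "real^'d \<Rightarrow> real"
  assumes sm: "L_smooth L g" and lb: "\<And>z. m \<le> g z"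
  shows "(norm (gradient g y))\<^sup>2 \<le> 2 * L * (g y - m)"
proof -
  define G where "G = gradient g y"
  define q where "q = (norm G)\<^sup>2"
  have L0: "L \<ge> 0" using sm by (rule L_smooth_nonneg)
  have key: "m \<le> g y - s * q + L / 2 * s\<^sup>2 * q" for s
  proof -
    have "m \<le> g (y - s *\<^sub>R G)" by (rule lb)
    also have "\<dots> \<le> g y + ((y - s *\<^sub>R G) - y) \<bullet> G + L / 2 * (norm ((y - s *\<^sub>R G) - y))\<^sup>2"
      using descent[OF sm] unfolding G_def by blast
    also have "\<dots> = g y - s * q + L / 2 * s\<^sup>2 * q"
      by (simp add: q_def power2_norm_eq_inner power_mult_distrib)
    finally show ?thesis .
  qed
  show ?thesis
  proof (cases "L = 0")
    case True
    have "q = 0"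
    proof (rule ccontr)
      assume "q \<noteq> 0"
      then have qp: "q > 0" unfolding q_def by simp
      have "m \<le> g y - ((g y - m + 1) / q) * q" using key[of "(g y - m + 1) / q"] True by simp
      then show False using qp by simp
    qed
    then show ?thesis using True by (simp add: G_def q_def)
  next
    case False
    then have Lp: "L > 0" using L0 by simp
    have "m \<le> g y - (1 / L) * q + L / 2 * (1 / L)\<^sup>2 * q" by (rule key)
    also have "\<dots> = g y - q / (2 * L)" using Lp by (simp add: field_simps power2_eq_square)
    finally have "q / (2 * L) \<le> g y - m" by simp
    then have "q \<le> (g y - m) * (2 * L)" using Lp by (simp add: divide_le_eq)
    then show ?thesis by (simp add: G_def q_def mult.commute)
  qed
qed

lemma seq_bound:
  fixes e G :: "nat \<Rightarrow> real" and R \<gamma> :: real and k :: nat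
  assumes R: "R \<ge> 1" and g: "\<gamma> > 0" and e0: "\<And>t. e t \<ge> 0"
    and step: "\<And>t. e (Suc t) \<le> R * e t - \<gamma> / 2 * G t" and k: "k \<ge> 1"
    and G0: "\<And>t. G t \<ge> 0"
  shows "(MIN t\<in>{0..k-1}. G t) \<le> 2 * R ^ k * e 0 / (\<gamma> * real k)"
proof -
  have Rp: "R > 0" using R by simp
  have sum: "\<gamma> / 2 * (\<Sum>t<m. G t / R ^ Suc t) \<le> e 0 - e m / R ^ m" for m
  proof (induction m)
    case 0 then show ?case by simp
  next
    case (Suc m)
    have "e (Suc m) / R ^ Suc m \<le> (R * e m - \<gamma> / 2 * G m) / R ^ Suc m"
      using step[of m] Rp by (simp add: divide_right_mono)
    also have "\<dots> = e m / R ^ m - \<gamma> / 2 * (G m / R ^ Suc m)"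
      using Rp by (simp add: field_simps)
    finally show ?case using Suc.IH by (simp add: algebra_simps)
  qed
  define mn where "mn = (MIN t\<in>{0..k-1}. G t)"
  have mn_le: "mn \<le> G t" if "t < k" for t
    unfolding mn_def using that by (intro Min_le) auto
  have mn0: "mn \<ge> 0" unfolding mn_def using k G0 by (subst Min_ge_iff) auto
  have "(\<Sum>t<k. mn / R ^ k) \<le> (\<Sum>t<k. G t / R ^ Suc t)"
  proof (rule sum_mono)
    fix t assume t: "t \<in> {..<k}"
    have "R ^ Suc t \<le> R ^ k" using R t by (intro power_increasing) auto
    then have "mn / R ^ k \<le> mn / R ^ Suc t"
      using mn0 Rp by (intro divide_left_mono) auto
    also have "\<dots> \<le> G t / R ^ Suc t" using mn_le[of t] t Rp by (intro divide_right_mono) auto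
    finally show "mn / R ^ k \<le> G t / R ^ Suc t" .
  qed
  also have "\<dots> \<le> 2 / \<gamma> * (e 0 - e k / R ^ k)"
    using sum[of k] g by (simp add: field_simps)
  also have "\<dots> \<le> 2 / \<gamma> * e 0"
    using g e0[of k] Rp by (intro mult_left_mono) auto
  finally have "real k * mn / R ^ k \<le> 2 / \<gamma> * e 0" by simp
  then have "real k * mn \<le> 2 / \<gamma> * e 0 * R ^ k" using Rp by (simp add: divide_le_eq)
  moreover have "real k > 0" using k by simp
  ultimately have "real k * mn / real k \<le> 2 / \<gamma> * e 0 * R ^ k / real k" by (intro divide_right_mono) auto
  then have "mn \<le> 2 / \<gamma> * e 0 * R ^ k / real k" using \<open>real k > 0\<close> by simp
  also have "\<dots> = 2 * R ^ k * e 0 / (\<gamma> * real k)" using g by (simp add: field_simps)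
  finally show ?thesis unfolding mn_def .
qed




lemma Tmap_deriv: "(Tmap \<alpha> xi has_derivative (\<lambda>h. \<alpha> *\<^sub>R h)) (at x)"
  unfolding Tmap_def by (auto intro!: derivative_eq_intros)

lemma ftilde_gderiv:
  fixes f :: "nat \<Rightarrow> real^'d \<Rightarrow> real"
  assumes sm: "\<forall>i<n. L_smooth (L i) (f i)"
  shows "GDERIV (ftilde n f xs \<alpha>) x :> (1 / real n) *\<^sub>R (\<Sum>i<n. \<alpha> *\<^sub>R gradient (f i) (Tmap \<alpha> (xs i) x))"
proof -
  have comp: "((\<lambda>x. f i (Tmap \<alpha> (xs i) x)) has_derivative (\<lambda>h. h \<bullet> (\<alpha> *\<^sub>R gradient (f i) (Tmap \<alpha> (xs i) x)))) (at x)"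
    if i: "i < n" for i
  proof -
    have G: "(f i has_derivative (\<lambda>k. k \<bullet> gradient (f i) (Tmap \<alpha> (xs i) x))) (at (Tmap \<alpha> (xs i) x))"
      using gradient_works sm i unfolding L_smooth_def gderiv_def by blast
    show ?thesis using has_derivative_compose[OF Tmap_deriv G] by (simp add: o_def)
  qed
  have "((\<lambda>x. \<Sum>i<n. f i (Tmap \<alpha> (xs i) x)) has_derivative
         (\<lambda>h. \<Sum>i<n. h \<bullet> (\<alpha> *\<^sub>R gradient (f i) (Tmap \<alpha> (xs i) x)))) (at x)"
    using comp by (intro has_derivative_sum) auto
  then have "((\<lambda>x. (1 / real n) * (\<Sum>i<n. f i (Tmap \<alpha> (xs i) x))) has_derivative
         (\<lambda>h. (1 / real n) * (\<Sum>i<n. h \<bullet> (\<alpha> *\<^sub>R gradient (f i) (Tmap \<alpha> (xs i) x))))) (at x)"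
    by (rule has_derivative_mult_right)
  moreover have "(\<lambda>h. (1 / real n) * (\<Sum>i<n. h \<bullet> (\<alpha> *\<^sub>R gradient (f i) (Tmap \<alpha> (xs i) x))))
      = (\<lambda>h. h \<bullet> ((1 / real n) *\<^sub>R (\<Sum>i<n. \<alpha> *\<^sub>R gradient (f i) (Tmap \<alpha> (xs i) x))))"
    by (simp add: inner_sum_right)
  moreover have "ftilde n f xs \<alpha> = (\<lambda>x. (1 / real n) * (\<Sum>i<n. f i (Tmap \<alpha> (xs i) x)))"
    by (simp add: fun_eq_iff ftilde_def)
  ultimately show ?thesis unfolding gderiv_def by simp
qed

lemma ftilde_gradient:
  fixes f :: "nat \<Rightarrow> real^'d \<Rightarrow> real"
  assumes sm: "\<forall>i<n. L_smooth (L i) (f i)"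
  shows "gradient (ftilde n f xs \<alpha>) x = (1 / real n) *\<^sub>R (\<Sum>i<n. \<alpha> *\<^sub>R gradient (f i) (Tmap \<alpha> (xs i) x))"
  by (rule gradient_eqI[OF ftilde_gderiv[OF sm]])

lemma ftilde_smooth:
  fixes f :: "nat \<Rightarrow> real^'d \<Rightarrow> real"
  assumes sm: "\<forall>i<n. L_smooth (L i) (f i)" and a: "\<alpha> \<ge> 0"
  shows "L_smooth (\<alpha>\<^sup>2 * ((1 / real n) * (\<Sum>i<n. L i))) (ftilde n f xs \<alpha>)"
  unfolding L_smooth_def
proof safe
  fix x show "ftilde n f xs \<alpha> differentiable at x"
    using ftilde_gderiv[OF sm] unfolding gderiv_def differentiable_def by blast
next
  fix x y :: "real^'d"
  have "gradient (ftilde n f xs \<alpha>) x - gradient (ftilde n f xs \<alpha>) y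
      = (1 / real n) *\<^sub>R (\<Sum>i<n. \<alpha> *\<^sub>R (gradient (f i) (Tmap \<alpha> (xs i) x) - gradient (f i) (Tmap \<alpha> (xs i) y)))"
    unfolding ftilde_gradient[OF sm] by (simp add: sum_subtractf scaleR_diff_right algebra_simps)
  also have "norm \<dots> \<le> (1 / real n) * (\<Sum>i<n. norm (\<alpha> *\<^sub>R (gradient (f i) (Tmap \<alpha> (xs i) x) - gradient (f i) (Tmap \<alpha> (xs i) y))))"
  proof -
    have "\<And>S::real^'d. norm ((1 / real n) *\<^sub>R S) = (1 / real n) * norm S" by simp
    then show ?thesis by (simp only:) (intro mult_left_mono norm_sum, simp)
  qed
  also have "\<dots> \<le> (1 / real n) * (\<Sum>i<n. \<alpha> * (L i * (\<alpha> * norm (x - y))))"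
  proof (intro mult_left_mono sum_mono)
    fix i assume i: "i \<in> {..<n}"
    have "norm (gradient (f i) (Tmap \<alpha> (xs i) x) - gradient (f i) (Tmap \<alpha> (xs i) y)) \<le> L i * norm (Tmap \<alpha> (xs i) x - Tmap \<alpha> (xs i) y)"
      using sm i unfolding L_smooth_def by blast
    also have "Tmap \<alpha> (xs i) x - Tmap \<alpha> (xs i) y = \<alpha> *\<^sub>R (x - y)" by (simp add: Tmap_def algebra_simps)
    finally show "norm (\<alpha> *\<^sub>R (gradient (f i) (Tmap \<alpha> (xs i) x) - gradient (f i) (Tmap \<alpha> (xs i) y))) \<le> \<alpha> * (L i * (\<alpha> * norm (x - y)))"
      using a by (simp add: mult_left_mono)
  qed simp
  also have "\<dots> = \<alpha>\<^sup>2 * ((1 / real n) * (\<Sum>i<n. L i)) * norm (x - y)"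
    by (simp add: sum_distrib_left sum_distrib_right sum_divide_distrib power2_eq_square algebra_simps)
  finally show "norm (gradient (ftilde n f xs \<alpha>) x - gradient (ftilde n f xs \<alpha>) y) \<le> \<alpha>\<^sup>2 * ((1 / real n) * (\<Sum>i<n. L i)) * norm (x - y)" .
qed





lemma indep_nn_fubini:
  fixes h :: "'x \<times> 'x \<Rightarrow> ennreal" and N :: "'x measure" and K :: "'x measure"
    and X :: "'a \<Rightarrow> 'x" and Y :: "'a \<Rightarrow> 'x"
  assumes P: "prob_space M" and ind: "prob_space.indep_var M N X K Y"
    and h: "h \<in> borel_measurable (N \<Otimes>\<^sub>M K)"
  shows "(\<integral>\<^sup>+s. h (X s, Y s) \<partial>M) = (\<integral>\<^sup>+s. (\<integral>\<^sup>+s'. h (X s, Y s') \<partial>M) \<partial>M)"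
proof -
  interpret prob_space M by (rule P)
  have X: "X \<in> measurable M N" and Y: "Y \<in> measurable M K"
    using indep_var_rv1[OF ind] indep_var_rv2[OF ind] by auto
  interpret PX: prob_space "distr M N X" by (rule prob_space_distr[OF X])
  interpret PY: prob_space "distr M K Y" by (rule prob_space_distr[OF Y])
  interpret PXY: pair_sigma_finite "distr M N X" "distr M K Y" ..
  have eq: "distr M N X \<Otimes>\<^sub>M distr M K Y = distr M (N \<Otimes>\<^sub>M K) (\<lambda>x. (X x, Y x))"
    using ind indep_var_distribution_eq by blast
  have sets_eq: "sets (distr M N X \<Otimes>\<^sub>M distr M K Y) = sets (N \<Otimes>\<^sub>M K)"
    by (intro sets_pair_measure_cong sets_distr)
  have hm: "h \<in> borel_measurable (distr M N X \<Otimes>\<^sub>M distr M K Y)"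
    using h measurable_cong_sets[OF sets_eq refl] by simp
  have XY: "(\<lambda>x. (X x, Y x)) \<in> measurable M (N \<Otimes>\<^sub>M K)" using X Y by (rule measurable_Pair)
  have "(\<integral>\<^sup>+s. h (X s, Y s) \<partial>M) = integral\<^sup>N (distr M (N \<Otimes>\<^sub>M K) (\<lambda>x. (X x, Y x))) h"
    using XY h by (simp add: nn_integral_distr)
  also have "\<dots> = integral\<^sup>N (distr M N X \<Otimes>\<^sub>M distr M K Y) h" by (simp only: eq)
  also have "\<dots> = (\<integral>\<^sup>+x. (\<integral>\<^sup>+y. h (x, y) \<partial>distr M K Y) \<partial>distr M N X)"
    using PY.nn_integral_fst[OF hm] by simp
  also have "\<dots> = (\<integral>\<^sup>+x. (\<integral>\<^sup>+s'. h (x, Y s') \<partial>M) \<partial>distr M N X)"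
  proof (rule nn_integral_cong)
    fix x assume "x \<in> space (distr M N X)"
    then have x: "x \<in> space N" by simp
    have "(\<lambda>y. h (x, y)) \<in> borel_measurable K" using measurable_Pair2[OF h x] .
    then show "(\<integral>\<^sup>+y. h (x, y) \<partial>distr M K Y) = (\<integral>\<^sup>+s'. h (x, Y s') \<partial>M)"
      using Y by (simp add: nn_integral_distr)
  qed
  also have "\<dots> = (\<integral>\<^sup>+s. (\<integral>\<^sup>+s'. h (X s, Y s') \<partial>M) \<partial>M)"
  proof -
    have m: "(\<lambda>x. \<integral>\<^sup>+y. h (x, y) \<partial>distr M K Y) \<in> borel_measurable N"
      using PY.borel_measurable_nn_integral_fst[of h N] h measurable_cong_sets[OF sets_pair_measure_cong[OF refl sets_distr] refl] by simp
    have "(\<integral>\<^sup>+x. (\<integral>\<^sup>+s'. h (x, Y s') \<partial>M) \<partial>distr M N X) = (\<integral>\<^sup>+x. (\<integral>\<^sup>+y. h (x, y) \<partial>distr M K Y) \<partial>distr M N X)"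
    proof (rule nn_integral_cong)
      fix x assume "x \<in> space (distr M N X)"
      then have x: "x \<in> space N" by simp
      have "(\<lambda>y. h (x, y)) \<in> borel_measurable K" using measurable_Pair2[OF h x] .
      then show "(\<integral>\<^sup>+s'. h (x, Y s') \<partial>M) = (\<integral>\<^sup>+y. h (x, y) \<partial>distr M K Y)"
        using Y by (simp add: nn_integral_distr)
    qed
    also have "\<dots> = (\<integral>\<^sup>+s. (\<integral>\<^sup>+y. h (X s, y) \<partial>distr M K Y) \<partial>M)"
      using X m by (simp add: nn_integral_distr)
    also have "\<dots> = (\<integral>\<^sup>+s. (\<integral>\<^sup>+s'. h (X s, Y s') \<partial>M) \<partial>M)"
    proof (rule nn_integral_cong)
      fix s assume "s \<in> space M"
      then have x: "X s \<in> space N" using X by (simp add: measurable_space)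
      have "(\<lambda>y. h (X s, y)) \<in> borel_measurable K" using measurable_Pair2[OF h x] .
      then show "(\<integral>\<^sup>+y. h (X s, y) \<partial>distr M K Y) = (\<integral>\<^sup>+s'. h (X s, Y s') \<partial>M)"
        using Y by (simp add: nn_integral_distr)
    qed
    finally show ?thesis .
  qed
  finally show ?thesis .
qed


lemma indep_int_fubini:
  fixes h :: "'x \<times> 'x \<Rightarrow> real" and N :: "'x measure" and K :: "'x measure"
    and X :: "'a \<Rightarrow> 'x" and Y :: "'a \<Rightarrow> 'x"
  assumes P: "prob_space M" and ind: "prob_space.indep_var M N X K Y"
    and h: "h \<in> borel_measurable (N \<Otimes>\<^sub>M K)"
    and int: "integrable M (\<lambda>s. h (X s, Y s))"
  shows "integrable M (\<lambda>s. \<integral>s'. h (X s, Y s') \<partial>M)"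
    and "(\<integral>s. h (X s, Y s) \<partial>M) = (\<integral>s. (\<integral>s'. h (X s, Y s') \<partial>M) \<partial>M)"
proof -
  interpret prob_space M by (rule P)
  have X: "X \<in> measurable M N" and Y: "Y \<in> measurable M K"
    using indep_var_rv1[OF ind] indep_var_rv2[OF ind] by auto
  interpret PX: prob_space "distr M N X" by (rule prob_space_distr[OF X])
  interpret PY: prob_space "distr M K Y" by (rule prob_space_distr[OF Y])
  interpret PXY: pair_sigma_finite "distr M N X" "distr M K Y" ..
  have eq: "distr M N X \<Otimes>\<^sub>M distr M K Y = distr M (N \<Otimes>\<^sub>M K) (\<lambda>x. (X x, Y x))"
    using ind indep_var_distribution_eq by blast
  have sets_eq: "sets (distr M N X \<Otimes>\<^sub>M distr M K Y) = sets (N \<Otimes>\<^sub>M K)"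
    by (intro sets_pair_measure_cong sets_distr)
  have hm: "h \<in> borel_measurable (distr M N X \<Otimes>\<^sub>M distr M K Y)"
    using h measurable_cong_sets[OF sets_eq refl] by simp
  have XY: "(\<lambda>x. (X x, Y x)) \<in> measurable M (N \<Otimes>\<^sub>M K)" using X Y by (rule measurable_Pair)
  have int2: "integrable (distr M (N \<Otimes>\<^sub>M K) (\<lambda>x. (X x, Y x))) h"
    using integrable_distr_eq[OF XY h] int by simp
  then have int3: "integrable (distr M N X \<Otimes>\<^sub>M distr M K Y) h" by (simp only: eq)
  have inner: "(\<integral>y. h (x, y) \<partial>distr M K Y) = (\<integral>s'. h (x, Y s') \<partial>M)" if x: "x \<in> space N" for x
  proof -
    have "(\<lambda>y. h (x, y)) \<in> borel_measurable K" using measurable_Pair2[OF h x] .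
    then show ?thesis using Y by (simp add: integral_distr)
  qed
  have Hm: "(\<lambda>x. \<integral>y. h (x, y) \<partial>distr M K Y) \<in> borel_measurable N"
    using PY.borel_measurable_lebesgue_integral[of "\<lambda>x y. h (x, y)" N] h
      measurable_cong_sets[OF sets_pair_measure_cong[OF refl sets_distr] refl] by simp
  have i1: "integrable (distr M N X) (\<lambda>x. \<integral>y. h (x, y) \<partial>distr M K Y)"
    by (rule PXY.integrable_fst'[OF int3])
  then have i2: "integrable M (\<lambda>s. \<integral>y. h (X s, y) \<partial>distr M K Y)"
    using integrable_distr_eq[OF X Hm] by simp
  have cong: "(\<integral>y. h (X s, y) \<partial>distr M K Y) = (\<integral>s'. h (X s, Y s') \<partial>M)" if "s \<in> space M" for s
    using inner[of "X s"] that X by (simp add: measurable_space)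
  show "integrable M (\<lambda>s. \<integral>s'. h (X s, Y s') \<partial>M)"
    using i2 Bochner_Integration.integrable_cong[of M M "\<lambda>s. \<integral>y. h (X s, y) \<partial>distr M K Y" "\<lambda>s. \<integral>s'. h (X s, Y s') \<partial>M", OF refl cong] by blast
  have "(\<integral>s. h (X s, Y s) \<partial>M) = integral\<^sup>L (distr M (N \<Otimes>\<^sub>M K) (\<lambda>x. (X x, Y x))) h"
    using XY h by (simp add: integral_distr)
  also have "\<dots> = integral\<^sup>L (distr M N X \<Otimes>\<^sub>M distr M K Y) h" by (simp only: eq)
  also have "\<dots> = (\<integral>x. (\<integral>y. h (x, y) \<partial>distr M K Y) \<partial>distr M N X)"
    using PXY.integral_fst'[OF int3] by simp
  also have "\<dots> = (\<integral>s. (\<integral>y. h (X s, y) \<partial>distr M K Y) \<partial>M)"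
    using X Hm by (simp add: integral_distr)
  also have "\<dots> = (\<integral>s. (\<integral>s'. h (X s, Y s') \<partial>M) \<partial>M)"
    using cong by (intro Bochner_Integration.integral_cong) auto
  finally show "(\<integral>s. h (X s, Y s) \<partial>M) = (\<integral>s. (\<integral>s'. h (X s, Y s') \<partial>M) \<partial>M)" .
qed




lemma compress_sum:
  fixes C :: "nat \<Rightarrow> 'a \<Rightarrow> real^'d \<Rightarrow> real^'d" and u :: "nat \<Rightarrow> real^'d" and n :: nat
  assumes P: "prob_space M"
    and inB: "\<forall>i<n. in_B M \<omega> (C i)"
    and ind: "\<forall>i<n. \<forall>j<n. i \<noteq> j \<longrightarrow> prob_space.indep_var M borel (\<lambda>s. C i s (u i)) borel (\<lambda>s. C j s (u j))"
  shows "integrable M (\<lambda>s. (1 / real n) *\<^sub>R (\<Sum>i<n. C i s (u i)))"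
    and "(\<integral>s. (1 / real n) *\<^sub>R (\<Sum>i<n. C i s (u i)) \<partial>M) = (1 / real n) *\<^sub>R (\<Sum>i<n. u i)"
    and "integrable M (\<lambda>s. (norm ((1 / real n) *\<^sub>R (\<Sum>i<n. C i s (u i))))\<^sup>2)"
    and "(\<integral>s. (norm ((1 / real n) *\<^sub>R (\<Sum>i<n. C i s (u i))))\<^sup>2 \<partial>M)
          \<le> (norm ((1 / real n) *\<^sub>R (\<Sum>i<n. u i)))\<^sup>2 + \<omega> / (real n)\<^sup>2 * (\<Sum>i<n. (norm (u i))\<^sup>2)"
proof -
  interpret prob_space M by (rule P)
  define D where "D i s = C i s (u i) - u i" for i s
  have Ci: "integrable M (\<lambda>s. C i s (u i))" "(\<integral>s. C i s (u i) \<partial>M) = u i"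
     "integrable M (\<lambda>s. (norm (C i s (u i) - u i))\<^sup>2)"
     "(\<integral>s. (norm (C i s (u i) - u i))\<^sup>2 \<partial>M) \<le> \<omega> * (norm (u i))\<^sup>2" if "i < n" for i
    using inB that unfolding in_B_def by blast+
  have Di: "integrable M (D i)" "(\<integral>s. D i s \<partial>M) = 0" if "i < n" for i
    using Ci[OF that] unfolding D_def by (auto simp: prob_space)
  have Dsq: "integrable M (\<lambda>s. D i s \<bullet> D i s)" "(\<integral>s. D i s \<bullet> D i s \<partial>M) \<le> \<omega> * (norm (u i))\<^sup>2" if "i < n" for i
    using Ci(3,4)[OF that] unfolding D_def by (simp_all add: power2_norm_eq_inner)
  have Dmeas: "D i \<in> borel_measurable M" if "i < n" for i using Di(1)[OF that] by auto
  have cross: "integrable M (\<lambda>s. D i s \<bullet> D j s) \<and> (\<integral>s. D i s \<bullet> D j s \<partial>M) = 0"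
    if ij: "i < n" "j < n" "i \<noteq> j" for i j
  proof -
    have indij: "indep_var borel (\<lambda>s. C i s (u i)) borel (\<lambda>s. C j s (u j))" using ind ij by blast
    have comp: "indep_var borel (\<lambda>s. D i s \<bullet> b) borel (\<lambda>s. D j s \<bullet> b)" for b :: "real^'d"
    proof -
      have m1: "(\<lambda>v. (v - u i) \<bullet> b) \<in> borel_measurable borel" by measurable
      have m2: "(\<lambda>v. (v - u j) \<bullet> b) \<in> borel_measurable borel" by measurable
      show ?thesis using indep_var_compose[OF indij m1 m2] by (simp add: o_def D_def)
    qed
    have intb: "integrable M (\<lambda>s. D k s \<bullet> b)" "(\<integral>s. D k s \<bullet> b \<partial>M) = 0" if "k < n" for k and b :: "real^'d"
      using Di[OF that] by auto
    have each: "integrable M (\<lambda>s. (D i s \<bullet> b) * (D j s \<bullet> b)) \<and> (\<integral>s. (D i s \<bullet> b) * (D j s \<bullet> b) \<partial>M) = 0" for b :: "real^'d"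
      using indep_var_integrable[OF comp intb(1)[OF ij(1)] intb(1)[OF ij(2)]]
        indep_var_lebesgue_integral[OF comp intb(1)[OF ij(1)] intb(1)[OF ij(2)]] intb(2)[OF ij(1)]
      by simp
    have eq: "(\<lambda>s. D i s \<bullet> D j s) = (\<lambda>s. \<Sum>b\<in>Basis. (D i s \<bullet> b) * (D j s \<bullet> b))"
      by (rule ext, rule euclidean_inner)
    show ?thesis unfolding eq using each by (simp add: Bochner_Integration.integral_sum)
  qed
  define S where "S s = (\<Sum>i<n. D i s)" for s
  have SS: "S s \<bullet> S s = (\<Sum>i<n. \<Sum>j<n. D i s \<bullet> D j s)" for s
    unfolding S_def by (simp add: inner_sum_left inner_sum_right) (rule sum.swap)
  have term_int: "integrable M (\<lambda>s. D i s \<bullet> D j s)" if "i < n" "j < n" for i j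
    using cross[of i j] Dsq(1)[of i] that by (cases "i = j") auto
  have term_val: "(\<integral>s. D i s \<bullet> D j s \<partial>M) = (if j = i then (\<integral>s. D i s \<bullet> D i s \<partial>M) else 0)"
    if "i < n" "j < n" for i j
    using cross[of i j] that by auto
  have Sint: "integrable M (\<lambda>s. S s \<bullet> S s)"
    unfolding SS using term_int by (intro Bochner_Integration.integrable_sum) auto
  have "(\<integral>s. S s \<bullet> S s \<partial>M) = (\<Sum>i<n. (\<integral>s. (\<Sum>j<n. D i s \<bullet> D j s) \<partial>M))"
    unfolding SS by (intro Bochner_Integration.integral_sum Bochner_Integration.integrable_sum term_int) auto
  also have "\<dots> = (\<Sum>i<n. \<Sum>j<n. (\<integral>s. D i s \<bullet> D j s \<partial>M))"
    by (intro sum.cong refl Bochner_Integration.integral_sum term_int) auto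
  also have "\<dots> = (\<Sum>i<n. (\<integral>s. D i s \<bullet> D i s \<partial>M))"
  proof (rule sum.cong[OF refl])
    fix i assume i: "i \<in> {..<n}"
    have "(\<Sum>j<n. (\<integral>s. D i s \<bullet> D j s \<partial>M)) = (\<Sum>j<n. (if j = i then (\<integral>s. D i s \<bullet> D i s \<partial>M) else 0))"
      using term_val i by (intro sum.cong) auto
    also have "\<dots> = (\<integral>s. D i s \<bullet> D i s \<partial>M)" using i by (simp add: sum.delta)
    finally show "(\<Sum>j<n. (\<integral>s. D i s \<bullet> D j s \<partial>M)) = (\<integral>s. D i s \<bullet> D i s \<partial>M)" .
  qed
  also have "\<dots> \<le> (\<Sum>i<n. \<omega> * (norm (u i))\<^sup>2)" using Dsq(2) by (intro sum_mono) auto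
  finally have Sval: "(\<integral>s. S s \<bullet> S s \<partial>M) \<le> \<omega> * (\<Sum>i<n. (norm (u i))\<^sup>2)" by (simp add: sum_distrib_left)
  define w where "w = (1 / real n) *\<^sub>R (\<Sum>i<n. u i)"
  have Geq: "(1 / real n) *\<^sub>R (\<Sum>i<n. C i s (u i)) = w + (1 / real n) *\<^sub>R S s" for s
    unfolding w_def S_def D_def by (simp add: sum_subtractf scaleR_diff_right)
  have Sint1: "integrable M S" unfolding S_def[abs_def] using Di(1) by (intro Bochner_Integration.integrable_sum) auto
  have Sval1: "(\<integral>s. S s \<partial>M) = 0" unfolding S_def using Di by (simp add: Bochner_Integration.integral_sum)
  have wS: "integrable M (\<lambda>s. w \<bullet> S s)" "(\<integral>s. w \<bullet> S s \<partial>M) = 0"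
    using Sint1 Sval1 by auto
  have sq: "(norm ((1 / real n) *\<^sub>R (\<Sum>i<n. C i s (u i))))\<^sup>2 = w \<bullet> w + 2 * (1 / real n) * (w \<bullet> S s) + (1 / real n)\<^sup>2 * (S s \<bullet> S s)" for s
    unfolding Geq power2_norm_eq_inner by (simp add: inner_add_left inner_add_right inner_commute power2_eq_square algebra_simps)
  show "integrable M (\<lambda>s. (1 / real n) *\<^sub>R (\<Sum>i<n. C i s (u i)))"
    using Ci(1) by (intro integrable_scaleR_right Bochner_Integration.integrable_sum) auto
  show "(\<integral>s. (1 / real n) *\<^sub>R (\<Sum>i<n. C i s (u i)) \<partial>M) = (1 / real n) *\<^sub>R (\<Sum>i<n. u i)"
    using Ci(1,2) by (simp add: Bochner_Integration.integral_sum)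
  show "integrable M (\<lambda>s. (norm ((1 / real n) *\<^sub>R (\<Sum>i<n. C i s (u i))))\<^sup>2)"
    unfolding sq using wS Sint by auto
  have "(\<integral>s. (norm ((1 / real n) *\<^sub>R (\<Sum>i<n. C i s (u i))))\<^sup>2 \<partial>M)
      = w \<bullet> w + (1 / real n)\<^sup>2 * (\<integral>s. S s \<bullet> S s \<partial>M)"
    unfolding sq using wS Sint by (simp add: prob_space)
  also have "\<dots> \<le> w \<bullet> w + (1 / real n)\<^sup>2 * (\<omega> * (\<Sum>i<n. (norm (u i))\<^sup>2))"
    using Sval by (intro add_left_mono mult_left_mono) auto
  also have "\<dots> = (norm w)\<^sup>2 + \<omega> / (real n)\<^sup>2 * (\<Sum>i<n. (norm (u i))\<^sup>2)"
    by (simp add: dot_square_norm power_divide)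
  finally show "(\<integral>s. (norm ((1 / real n) *\<^sub>R (\<Sum>i<n. C i s (u i))))\<^sup>2 \<partial>M)
          \<le> (norm ((1 / real n) *\<^sub>R (\<Sum>i<n. u i)))\<^sup>2 + \<omega> / (real n)\<^sup>2 * (\<Sum>i<n. (norm (u i))\<^sup>2)"
    unfolding w_def .
qed





lemma integrable_by_bound:
  fixes f g :: "'a \<Rightarrow> real"
  assumes "integrable M g" "f \<in> borel_measurable M" "\<And>s. s \<in> space M \<Longrightarrow> \<bar>f s\<bar> \<le> g s"
  shows "integrable M f"
proof (rule Bochner_Integration.integrable_bound[OF assms(1,2)])
  show "AE x in M. norm (f x) \<le> norm (g x)"
    using assms(3) by (intro AE_I2) (auto intro: order_trans[OF _ abs_ge_self])
qed

lemma L_smooth_cont: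
  assumes "L_smooth L (g :: real^'d \<Rightarrow> real)"
  shows "continuous_on UNIV (gradient g)" "continuous_on UNIV g"
proof -
  have "L-lipschitz_on UNIV (gradient g)"
    using assms L_smooth_nonneg[OF assms] unfolding L_smooth_def by (intro lipschitz_onI) (auto simp: dist_norm)
  then show "continuous_on UNIV (gradient g)" by (rule lipschitz_on_continuous_on)
  show "continuous_on UNIV g"
    using assms unfolding L_smooth_def by (intro differentiable_imp_continuous_on) (auto simp: differentiable_on_def)
qed

locale dsetup =
  fixes n :: nat and f :: "nat \<Rightarrow> real^'d \<Rightarrow> real" and L :: "nat \<Rightarrow> real" and xs :: "nat \<Rightarrow> real^'d"
    and \<alpha> \<omega> \<gamma>0 :: real and M :: "'a measure" and S :: "'b measure"
    and \<xi> :: "nat \<Rightarrow> nat \<Rightarrow> 'a \<Rightarrow> 'b" and Q :: "nat \<Rightarrow> nat \<Rightarrow> 'b \<Rightarrow> real^'d \<Rightarrow> real^'d"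
  assumes n_pos: "n \<ge> 1"
    and smooth: "\<forall>i<n. L_smooth (L i) (f i)"
    and min_exists: "\<forall>i<n. \<exists>z. \<forall>y. f i z \<le> f i y"
    and alpha: "0 < \<alpha>" "\<alpha> < 1"
    and omega: "\<omega> \<ge> 0"
    and M_prob: "prob_space M"
    and indep: "prob_space.indep_vars M (\<lambda>_. S) (\<lambda>(i, t). \<xi> i t) ({..<n} \<times> UNIV)"
    and Q_meas: "\<forall>i<n. \<forall>t. (\<lambda>(b, x). Q i t b x) \<in> borel_measurable (S \<Otimes>\<^sub>M borel)"
    and compress: "\<forall>i<n. \<forall>t. in_B M \<omega> (\<lambda>s. Q i t (\<xi> i t s))"
    and gamma0: "0 < \<gamma>0"
    and stepsize: "(\<gamma>0 / \<alpha>\<^sup>2) * ((1 / real n) * (\<Sum>i<n. L i)) * \<alpha>\<^sup>2 \<le> 1"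
begin

sublocale prob_space M by (rule M_prob)

definition "\<gamma> = \<gamma>0 / \<alpha>\<^sup>2"
definition "v i x = \<alpha> *\<^sub>R gradient (f i) (Tmap \<alpha> (xs i) x)"
definition "Lbar = (1 / real n) * (\<Sum>i<n. L i)"
definition "Lt = \<alpha>\<^sup>2 * Lbar"
definition "fs = (1 / real n) * (\<Sum>i<n. INF y. f i y)"
definition "F = ftilde n f xs \<alpha>"
definition "Lmax = Max (L ` {..<n})"
definition "Gx t x y = (1 / real n) *\<^sub>R (\<Sum>i<n. Q i t (y (i, t)) (v i x))"

primrec xd :: "real^'d \<Rightarrow> nat \<Rightarrow> (nat \<times> nat \<Rightarrow> 'b) \<Rightarrow> real^'d" where
  "xd x0 0 y = x0"
| "xd x0 (Suc t) y = xd x0 t y - \<gamma> *\<^sub>R Gx t (xd x0 t y) y"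

lemma dcgd_eq: "dcgd n f xs \<alpha> (\<gamma>0 / \<alpha>\<^sup>2) Q \<xi> x0 t s = xd x0 t (\<lambda>(i, u). \<xi> i u s)"
  by (induction t) (simp_all add: Gx_def v_def \<gamma>_def)

lemma xd_local: "(\<And>i u. i < n \<Longrightarrow> u < t \<Longrightarrow> y (i, u) = y' (i, u)) \<Longrightarrow> xd x0 t y = xd x0 t y'"
proof (induction t)
  case 0 then show ?case by simp
next
  case (Suc t)
  have "xd x0 t y = xd x0 t y'" using Suc by simp
  moreover have "Gx t x y = Gx t x y'" for x unfolding Gx_def using Suc.prems by simp
  ultimately show ?case by simp
qed

lemma Gx_local: "(\<And>i. i < n \<Longrightarrow> y (i, t) = y' (i, t)) \<Longrightarrow> Gx t x y = Gx t x y'"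
  unfolding Gx_def by simp

lemma L_nonneg: "i < n \<Longrightarrow> L i \<ge> 0" using smooth L_smooth_nonneg by blast

lemma Lbar_nonneg: "Lbar \<ge> 0" unfolding Lbar_def using L_nonneg by (intro mult_nonneg_nonneg sum_nonneg) auto

lemma Lt_nonneg: "Lt \<ge> 0" unfolding Lt_def using Lbar_nonneg by simp

lemma gamma_pos: "\<gamma> > 0" unfolding \<gamma>_def using gamma0 alpha by simp

lemma Lt_gamma: "Lt * \<gamma> \<le> 1"
  using stepsize alpha unfolding Lt_def \<gamma>_def Lbar_def by (simp add: algebra_simps)

lemma F_grad: "gradient F x = (1 / real n) *\<^sub>R (\<Sum>i<n. v i x)"
  unfolding F_def v_def using ftilde_gradient[OF smooth] by simp

lemma F_smooth: "L_smooth Lt F"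
  unfolding F_def Lt_def Lbar_def using ftilde_smooth[OF smooth] alpha by simp

lemma bdd_f: "i < n \<Longrightarrow> bdd_below (range (f i))"
  using min_exists by (auto simp: bdd_below_def)

lemma inf_le: "i < n \<Longrightarrow> (INF y. f i y) \<le> f i z"
  using bdd_f by (intro cINF_lower) auto

lemma F_lb: "fs \<le> F x"
proof -
  have "(\<Sum>i<n. INF y. f i y) \<le> (\<Sum>i<n. f i (Tmap \<alpha> (xs i) x))"
    using inf_le by (intro sum_mono) auto
  then show ?thesis unfolding fs_def F_def ftilde_def by (intro mult_left_mono) auto
qed

lemma Lmax_ge: "i < n \<Longrightarrow> L i \<le> Lmax"
  unfolding Lmax_def by (intro Max_ge) auto

lemma v_sq: "i < n \<Longrightarrow> (norm (v i x))\<^sup>2 \<le> 2 * \<alpha>\<^sup>2 * Lmax * (f i (Tmap \<alpha> (xs i) x) - (INF y. f i y))"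
proof -
  assume i: "i < n"
  have "(norm (gradient (f i) (Tmap \<alpha> (xs i) x)))\<^sup>2 \<le> 2 * L i * (f i (Tmap \<alpha> (xs i) x) - (INF y. f i y))"
    using smooth i inf_le[OF i] by (intro grad_sq_bound) auto
  also have "\<dots> \<le> 2 * Lmax * (f i (Tmap \<alpha> (xs i) x) - (INF y. f i y))"
    using Lmax_ge[OF i] inf_le[OF i] by (intro mult_right_mono) auto
  finally show ?thesis unfolding v_def using alpha
    by (simp add: power_mult_distrib mult_left_mono mult.assoc)
qed

lemma v_sum_sq: "(\<Sum>i<n. (norm (v i x))\<^sup>2) \<le> 2 * \<alpha>\<^sup>2 * Lmax * real n * (F x - fs)"
proof -
  have "(\<Sum>i<n. (norm (v i x))\<^sup>2) \<le> (\<Sum>i<n. 2 * \<alpha>\<^sup>2 * Lmax * (f i (Tmap \<alpha> (xs i) x) - (INF y. f i y)))"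
    using v_sq by (intro sum_mono) auto
  also have "\<dots> = 2 * \<alpha>\<^sup>2 * Lmax * ((\<Sum>i<n. f i (Tmap \<alpha> (xs i) x)) - (\<Sum>i<n. INF y. f i y))"
    by (simp add: sum_distrib_left[symmetric] sum_subtractf)
  also have "(\<Sum>i<n. f i (Tmap \<alpha> (xs i) x)) - (\<Sum>i<n. INF y. f i y) = real n * (F x - fs)"
    using n_pos unfolding F_def ftilde_def fs_def by (simp add: right_diff_distrib)
  finally show ?thesis by (simp add: mult.assoc)
qed


lemma v_meas[measurable]: "i < n \<Longrightarrow> v i \<in> borel_measurable borel"
proof -
  assume i: "i < n"
  have [measurable]: "gradient (f i) \<in> borel_measurable borel"
    using smooth i L_smooth_cont(1) borel_measurable_continuous_onI by blast
  show ?thesis unfolding v_def Tmap_def by measurable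
qed

lemma F_meas[measurable]: "F \<in> borel_measurable borel"
  using L_smooth_cont(2)[OF F_smooth] borel_measurable_continuous_onI by blast

lemma gradF_meas[measurable]: "gradient F \<in> borel_measurable borel"
  using L_smooth_cont(1)[OF F_smooth] borel_measurable_continuous_onI by blast

lemma Gx_meas:
  fixes N :: "'c measure"
  assumes X: "X \<in> borel_measurable N" and P: "P \<in> measurable N (PiM B (\<lambda>_. S))"
    and B: "\<And>i. i < n \<Longrightarrow> (i, t) \<in> B"
  shows "(\<lambda>w. Gx t (X w) (P w)) \<in> borel_measurable N"
proof -
  have each: "(\<lambda>w. Q i t (P w (i, t)) (v i (X w))) \<in> borel_measurable N" if i: "i < n" for i
  proof -
    have c: "(\<lambda>w. P w (i, t)) \<in> measurable N S"
      using measurable_compose[OF P measurable_component_singleton[OF B[OF i]]] by (simp add: o_def)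
    have "(\<lambda>w. v i (X w)) \<in> borel_measurable N"
      using measurable_compose[OF X v_meas[OF i]] by (simp add: o_def)
    then have pm: "(\<lambda>w. (P w (i, t), v i (X w))) \<in> measurable N (S \<Otimes>\<^sub>M borel)"
      using c by (intro measurable_Pair) auto
    have "(\<lambda>(b, x). Q i t b x) \<in> borel_measurable (S \<Otimes>\<^sub>M borel)" using Q_meas i by blast
    from measurable_compose[OF pm this]
    have "(\<lambda>w. (\<lambda>(b, x). Q i t b x) (P w (i, t), v i (X w))) \<in> borel_measurable N" .
    then show ?thesis by simp
  qed
  show ?thesis unfolding Gx_def
    using each by (intro borel_measurable_scaleR borel_measurable_sum) auto
qed

lemma xd_meas: "{..<n} \<times> {..<t} \<subseteq> B \<Longrightarrow> xd x0 t \<in> borel_measurable (PiM B (\<lambda>_. S))"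
proof (induction t)
  case 0 then show ?case by simp
next
  case (Suc t)
  have "{..<n} \<times> {..<t} \<subseteq> B" using Suc.prems by auto
  then have IH: "xd x0 t \<in> borel_measurable (PiM B (\<lambda>_. S))" using Suc.IH by blast
  have B: "(i, t) \<in> B" if "i < n" for i using Suc.prems that by auto
  have "(\<lambda>y. Gx t (xd x0 t y) y) \<in> borel_measurable (PiM B (\<lambda>_. S))"
    using Gx_meas[OF IH measurable_ident_sets[OF refl] B] by simp
  then show ?case using IH by simp
qed

definition "\<xi>' = (\<lambda>(i, t). \<xi> i t)"

lemma indep': "indep_vars (\<lambda>_. S) \<xi>' ({..<n} \<times> UNIV)"
  using indep unfolding \<xi>'_def .

lemma rv_xi: "i < n \<Longrightarrow> \<xi> i t \<in> measurable M S"
  using indep' unfolding indep_vars_def \<xi>'_def by auto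

lemma indep_ZY: "indep_var (PiM ({..<n} \<times> {..<t}) (\<lambda>_. S)) (\<lambda>s. restrict (\<lambda>j. \<xi>' j s) ({..<n} \<times> {..<t}))
    (PiM ({..<n} \<times> {t}) (\<lambda>_. S)) (\<lambda>s. restrict (\<lambda>j. \<xi>' j s) ({..<n} \<times> {t}))"
  by (rule indep_var_restrict[OF indep']) auto

lemma indep_pair:
  assumes ij: "i < n" "j < n" "i \<noteq> j"
  shows "indep_var borel (\<lambda>s. Q i t (\<xi> i t s) u) borel (\<lambda>s. Q j t (\<xi> j t s) u')"
proof -
  have I: "indep_var (PiM {(i, t)} (\<lambda>_. S)) (\<lambda>s. restrict (\<lambda>k. \<xi>' k s) {(i, t)})
    (PiM {(j, t)} (\<lambda>_. S)) (\<lambda>s. restrict (\<lambda>k. \<xi>' k s) {(j, t)})"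
    using ij by (intro indep_var_restrict[OF indep']) auto
  have m: "(\<lambda>\<omega>. Q k t (\<omega> (k, t)) w) \<in> borel_measurable (PiM {(k, t)} (\<lambda>_. S))" if k: "k < n" for k w
  proof -
    have "(\<lambda>\<omega>. (\<omega> (k, t), w)) \<in> measurable (PiM {(k, t)} (\<lambda>_. S)) (S \<Otimes>\<^sub>M borel)"
      by (intro measurable_Pair measurable_component_singleton) auto
    then have "(\<lambda>\<omega>. (\<lambda>(b, x). Q k t b x) (\<omega> (k, t), w)) \<in> borel_measurable (PiM {(k, t)} (\<lambda>_. S))"
      using measurable_compose Q_meas k by blast
    then show ?thesis by simp
  qed
  show ?thesis
    using indep_var_compose[OF I m[OF ij(1), of u] m[OF ij(2), of u']] by (simp add: o_def \<xi>'_def)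
qed

lemma gradF_sq: "(norm (gradient F x))\<^sup>2 \<le> 2 * Lt * (F x - fs)"
  using grad_sq_bound[OF F_smooth] F_lb by blast

definition "U t x y = F x - \<gamma> * (gradient F x \<bullet> Gx t x y) + Lt * \<gamma>\<^sup>2 / 2 * (norm (Gx t x y))\<^sup>2"
definition "cc = Lbar * \<gamma>0\<^sup>2 * \<omega> * Lmax / real n"
definition "Bd x = F x - \<gamma> / 2 * (norm (gradient F x))\<^sup>2 + cc * (F x - fs)"
definition "KK = 2 * Lt + 2 * \<alpha>\<^sup>2 * \<omega> * Lmax / real n"

lemma Gx_Y: "Gx t x (restrict (\<lambda>j. \<xi>' j s) ({..<n} \<times> {t})) = (1 / real n) *\<^sub>R (\<Sum>i<n. Q i t (\<xi> i t s) (v i x))"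
  unfolding Gx_def \<xi>'_def by (auto intro!: sum.cong)

lemma Gx_full: "Gx t x (\<lambda>j. \<xi>' j s) = (1 / real n) *\<^sub>R (\<Sum>i<n. Q i t (\<xi> i t s) (v i x))"
  unfolding Gx_def \<xi>'_def by auto

lemma fixed_x:
  shows "integrable M (\<lambda>s. (1 / real n) *\<^sub>R (\<Sum>i<n. Q i t (\<xi> i t s) (v i x)))"
    and "(\<integral>s. (1 / real n) *\<^sub>R (\<Sum>i<n. Q i t (\<xi> i t s) (v i x)) \<partial>M) = gradient F x"
    and "integrable M (\<lambda>s. (norm ((1 / real n) *\<^sub>R (\<Sum>i<n. Q i t (\<xi> i t s) (v i x))))\<^sup>2)"
    and "(\<integral>s. (norm ((1 / real n) *\<^sub>R (\<Sum>i<n. Q i t (\<xi> i t s) (v i x))))\<^sup>2 \<partial>M)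
          \<le> (norm (gradient F x))\<^sup>2 + \<omega> / (real n)\<^sup>2 * (\<Sum>i<n. (norm (v i x))\<^sup>2)"
proof -
  have inB: "\<forall>i<n. in_B M \<omega> (\<lambda>s u. Q i t (\<xi> i t s) u)" using compress by simp
  have ind: "\<forall>i<n. \<forall>j<n. i \<noteq> j \<longrightarrow> indep_var borel (\<lambda>s. Q i t (\<xi> i t s) (v i x)) borel (\<lambda>s. Q j t (\<xi> j t s) (v j x))"
    using indep_pair by blast
  note cs = compress_sum[OF M_prob inB ind]
  show "integrable M (\<lambda>s. (1 / real n) *\<^sub>R (\<Sum>i<n. Q i t (\<xi> i t s) (v i x)))" using cs(1) .
  show "(\<integral>s. (1 / real n) *\<^sub>R (\<Sum>i<n. Q i t (\<xi> i t s) (v i x)) \<partial>M) = gradient F x"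
    using cs(2) F_grad by simp
  show "integrable M (\<lambda>s. (norm ((1 / real n) *\<^sub>R (\<Sum>i<n. Q i t (\<xi> i t s) (v i x))))\<^sup>2)" using cs(3) .
  show "(\<integral>s. (norm ((1 / real n) *\<^sub>R (\<Sum>i<n. Q i t (\<xi> i t s) (v i x))))\<^sup>2 \<partial>M)
          \<le> (norm (gradient F x))\<^sup>2 + \<omega> / (real n)\<^sup>2 * (\<Sum>i<n. (norm (v i x))\<^sup>2)"
    using cs(4) F_grad by simp
qed

lemma var_bound: "\<omega> / (real n)\<^sup>2 * (\<Sum>i<n. (norm (v i x))\<^sup>2) \<le> 2 * \<alpha>\<^sup>2 * \<omega> * Lmax / real n * (F x - fs)"
proof -
  have "\<omega> / (real n)\<^sup>2 * (\<Sum>i<n. (norm (v i x))\<^sup>2) \<le> \<omega> / (real n)\<^sup>2 * (2 * \<alpha>\<^sup>2 * Lmax * real n * (F x - fs))"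
    using v_sum_sq omega by (intro mult_left_mono) auto
  also have "\<dots> = 2 * \<alpha>\<^sup>2 * \<omega> * Lmax / real n * (F x - fs)"
    using n_pos by (simp add: power2_eq_square field_simps)
  finally show ?thesis .
qed

lemma KK_nonneg: "KK \<ge> 0"
proof -
  have "Lmax \<ge> 0" using Lmax_ge[of 0] L_nonneg[of 0] n_pos by simp
  then show ?thesis unfolding KK_def using Lt_nonneg omega by simp
qed

lemma Gsq_bound:
  "(\<integral>s. (norm (Gx t x (restrict (\<lambda>j. \<xi>' j s) ({..<n} \<times> {t}))))\<^sup>2 \<partial>M) \<le> KK * (F x - fs)"
  "integrable M (\<lambda>s. (norm (Gx t x (restrict (\<lambda>j. \<xi>' j s) ({..<n} \<times> {t}))))\<^sup>2)"
proof -
  have "(\<integral>s. (norm (Gx t x (restrict (\<lambda>j. \<xi>' j s) ({..<n} \<times> {t}))))\<^sup>2 \<partial>M)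
      \<le> (norm (gradient F x))\<^sup>2 + \<omega> / (real n)\<^sup>2 * (\<Sum>i<n. (norm (v i x))\<^sup>2)"
    unfolding Gx_Y using fixed_x(4) .
  also have "\<dots> \<le> 2 * Lt * (F x - fs) + 2 * \<alpha>\<^sup>2 * \<omega> * Lmax / real n * (F x - fs)"
    using gradF_sq var_bound by (rule add_mono)
  also have "\<dots> = KK * (F x - fs)" unfolding KK_def by (simp add: algebra_simps)
  finally show "(\<integral>s. (norm (Gx t x (restrict (\<lambda>j. \<xi>' j s) ({..<n} \<times> {t}))))\<^sup>2 \<partial>M) \<le> KK * (F x - fs)" .
  show "integrable M (\<lambda>s. (norm (Gx t x (restrict (\<lambda>j. \<xi>' j s) ({..<n} \<times> {t}))))\<^sup>2)"
    unfolding Gx_Y using fixed_x(3) .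
qed

lemma U_inner:
  "integrable M (\<lambda>s. U t x (restrict (\<lambda>j. \<xi>' j s) ({..<n} \<times> {t})))"
  "(\<integral>s. U t x (restrict (\<lambda>j. \<xi>' j s) ({..<n} \<times> {t})) \<partial>M) \<le> Bd x"
proof -
  let ?G = "\<lambda>s. (1 / real n) *\<^sub>R (\<Sum>i<n. Q i t (\<xi> i t s) (v i x))"
  have eqU: "U t x (restrict (\<lambda>j. \<xi>' j s) ({..<n} \<times> {t})) = F x - \<gamma> * (gradient F x \<bullet> ?G s) + Lt * \<gamma>\<^sup>2 / 2 * (norm (?G s))\<^sup>2" for s
    unfolding U_def Gx_Y ..
  note fx = fixed_x[of t x]
  have i1: "integrable M (\<lambda>s. gradient F x \<bullet> ?G s)" by (rule integrable_inner_right) (rule fx(1))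
  have "(\<integral>s. gradient F x \<bullet> ?G s \<partial>M) = gradient F x \<bullet> (\<integral>s. ?G s \<partial>M)"
    by (rule integral_inner_right) (rule fx(1))
  then have e1: "(\<integral>s. gradient F x \<bullet> ?G s \<partial>M) = (norm (gradient F x))\<^sup>2"
    unfolding fx(2) by (simp add: power2_norm_eq_inner)
  show "integrable M (\<lambda>s. U t x (restrict (\<lambda>j. \<xi>' j s) ({..<n} \<times> {t})))"
    unfolding eqU by (intro Bochner_Integration.integrable_add Bochner_Integration.integrable_diff integrable_const integrable_mult_right i1 fx(3))
  let ?a = "\<lambda>s. gradient F x \<bullet> ?G s" and ?b = "\<lambda>s. (norm (?G s))\<^sup>2" and ?c = "Lt * \<gamma>\<^sup>2 / 2"
  have ia: "integrable M (\<lambda>s. \<gamma> * ?a s)" by (rule integrable_mult_right[OF i1])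
  have ib: "integrable M (\<lambda>s. ?c * ?b s)" by (rule integrable_mult_right[OF fx(3)])
  have "(\<integral>s. U t x (restrict (\<lambda>j. \<xi>' j s) ({..<n} \<times> {t})) \<partial>M)
      = (\<integral>s. F x - \<gamma> * ?a s \<partial>M) + (\<integral>s. ?c * ?b s \<partial>M)"
    unfolding eqU by (rule Bochner_Integration.integral_add) (intro Bochner_Integration.integrable_diff integrable_const ia, rule ib)
  also have "(\<integral>s. F x - \<gamma> * ?a s \<partial>M) = (\<integral>s. F x \<partial>M) - (\<integral>s. \<gamma> * ?a s \<partial>M)"
    by (rule Bochner_Integration.integral_diff) (rule integrable_const, rule ia)
  also have "(\<integral>s. \<gamma> * ?a s \<partial>M) = \<gamma> * (\<integral>s. ?a s \<partial>M)" by (rule integral_mult_right_zero)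
  also have "(\<integral>s. ?c * ?b s \<partial>M) = ?c * (\<integral>s. ?b s \<partial>M)" by (rule integral_mult_right_zero)
  also have "(\<integral>s. F x \<partial>M) = F x" by (simp add: prob_space)
  finally have "(\<integral>s. U t x (restrict (\<lambda>j. \<xi>' j s) ({..<n} \<times> {t})) \<partial>M)
      = F x - \<gamma> * (norm (gradient F x))\<^sup>2 + Lt * \<gamma>\<^sup>2 / 2 * (\<integral>s. (norm (?G s))\<^sup>2 \<partial>M)"
    unfolding e1 .
  also have "\<dots> \<le> F x - \<gamma> * (norm (gradient F x))\<^sup>2 + Lt * \<gamma>\<^sup>2 / 2 * ((norm (gradient F x))\<^sup>2 + 2 * \<alpha>\<^sup>2 * \<omega> * Lmax / real n * (F x - fs))"
  proof -
    have "(\<integral>s. (norm (?G s))\<^sup>2 \<partial>M) \<le> (norm (gradient F x))\<^sup>2 + 2 * \<alpha>\<^sup>2 * \<omega> * Lmax / real n * (F x - fs)"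
      using fx(4) var_bound[of x] by linarith
    moreover have "Lt * \<gamma>\<^sup>2 / 2 \<ge> 0" using Lt_nonneg by simp
    ultimately show ?thesis by (intro add_left_mono mult_left_mono) auto
  qed
  also have "\<dots> \<le> Bd x"
  proof -
    have g: "Lt * \<gamma>\<^sup>2 / 2 * (norm (gradient F x))\<^sup>2 \<le> \<gamma> / 2 * (norm (gradient F x))\<^sup>2"
    proof -
      have "Lt * \<gamma>\<^sup>2 / 2 = (Lt * \<gamma>) * \<gamma> / 2" by (simp add: power2_eq_square)
      also have "\<dots> \<le> 1 * \<gamma> / 2" using Lt_gamma gamma_pos by (intro divide_right_mono mult_right_mono) auto
      finally show ?thesis by (intro mult_right_mono) auto
    qed
    have c: "Lt * \<gamma>\<^sup>2 / 2 * (2 * \<alpha>\<^sup>2 * \<omega> * Lmax / real n * (F x - fs)) = cc * (F x - fs)"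
    proof -
      have k: "Lt * \<gamma>\<^sup>2 * \<alpha>\<^sup>2 = Lbar * \<gamma>0\<^sup>2"
        unfolding Lt_def \<gamma>_def using alpha by (simp add: power2_eq_square field_simps)
      have "Lt * \<gamma>\<^sup>2 / 2 * (2 * \<alpha>\<^sup>2 * \<omega> * Lmax / real n * (F x - fs)) = (Lt * \<gamma>\<^sup>2 * \<alpha>\<^sup>2) * \<omega> * Lmax / real n * (F x - fs)"
        by (simp add: algebra_simps)
      also have "\<dots> = cc * (F x - fs)" unfolding k cc_def by simp
      finally show ?thesis .
    qed
    show ?thesis unfolding Bd_def using g c by (simp add: algebra_simps)
  qed
  finally show "(\<integral>s. U t x (restrict (\<lambda>j. \<xi>' j s) ({..<n} \<times> {t})) \<partial>M) \<le> Bd x" .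
qed

definition "W x0 t s = xd x0 t (\<lambda>j. \<xi>' j s)"

lemma U_descent: "F (x - \<gamma> *\<^sub>R Gx t x y) \<le> U t x y"
proof -
  have "F (x - \<gamma> *\<^sub>R Gx t x y) \<le> F x + ((x - \<gamma> *\<^sub>R Gx t x y) - x) \<bullet> gradient F x + Lt / 2 * (norm ((x - \<gamma> *\<^sub>R Gx t x y) - x))\<^sup>2"
    by (rule descent[OF F_smooth])
  also have "(x - \<gamma> *\<^sub>R Gx t x y) - x = - (\<gamma> *\<^sub>R Gx t x y)" by simp
  also have "(- (\<gamma> *\<^sub>R Gx t x y)) \<bullet> gradient F x = - (\<gamma> * (gradient F x \<bullet> Gx t x y))"
    by (simp add: inner_commute[of "gradient F x"])
  also have "(norm (- (\<gamma> *\<^sub>R Gx t x y)))\<^sup>2 = \<gamma>\<^sup>2 * (norm (Gx t x y))\<^sup>2"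
    by (simp only: norm_minus_cancel norm_scaleR power_mult_distrib power2_abs)
  finally show ?thesis unfolding U_def by (simp add: algebra_simps)
qed

lemma inner_sq_bound: "\<bar>(a::real^'d) \<bullet> b\<bar> \<le> (norm a)\<^sup>2 + (norm b)\<^sup>2"
proof -
  have 1: "\<bar>a \<bullet> b\<bar> \<le> norm a * norm b" by (rule Cauchy_Schwarz_ineq2)
  have "0 \<le> (norm a - norm b)\<^sup>2" by simp
  then have 2: "2 * (norm a * norm b) \<le> (norm a)\<^sup>2 + (norm b)\<^sup>2" by (simp add: power2_diff)
  have 3: "0 \<le> norm a * norm b" by simp
  from 1 2 3 show ?thesis by linarith
qed

lemma main_step:
  assumes intF: "integrable M (\<lambda>s. F (W x0 t s))"
  shows "integrable M (\<lambda>s. (norm (gradient F (W x0 t s)))\<^sup>2)"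
    and "integrable M (\<lambda>s. F (W x0 (Suc t) s))"
    and "(\<integral>s. F (W x0 (Suc t) s) \<partial>M) - fs \<le> (1 + cc) * ((\<integral>s. F (W x0 t s) \<partial>M) - fs)
           - \<gamma> / 2 * (\<integral>s. (norm (gradient F (W x0 t s)))\<^sup>2 \<partial>M)"
proof -
  define Bt where "Bt = {..<n} \<times> {..<t}"
  define Dt where "Dt = {..<n} \<times> {t}"
  define Z where "Z s = restrict (\<lambda>j. \<xi>' j s) Bt" for s
  define Y where "Y s = restrict (\<lambda>j. \<xi>' j s) Dt" for s
  have ind: "indep_var (PiM Bt (\<lambda>_. S)) Z (PiM Dt (\<lambda>_. S)) Y"
    unfolding Bt_def Dt_def Z_def[abs_def] Y_def[abs_def] by (rule indep_ZY)
  have Zm: "Z \<in> measurable M (PiM Bt (\<lambda>_. S))" using indep_var_rv1[OF ind] .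
  have Ym: "Y \<in> measurable M (PiM Dt (\<lambda>_. S))" using indep_var_rv2[OF ind] .
  have xdm: "xd x0 t \<in> borel_measurable (PiM Bt (\<lambda>_. S))" by (rule xd_meas) (simp add: Bt_def)
  have WZ: "W x0 t s = xd x0 t (Z s)" for s
    unfolding W_def Z_def Bt_def by (rule xd_local) auto
  have WS: "W x0 (Suc t) s = W x0 t s - \<gamma> *\<^sub>R Gx t (W x0 t s) (Y s)" for s
  proof -
    have "Gx t (W x0 t s) (\<lambda>j. \<xi>' j s) = Gx t (W x0 t s) (Y s)"
      unfolding Y_def Dt_def by (rule Gx_local) auto
    then show ?thesis unfolding W_def by simp
  qed
  have Wm: "(\<lambda>s. W x0 t s) \<in> borel_measurable M"
    unfolding WZ using measurable_compose[OF Zm xdm] by (simp add: o_def)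
  have Gm: "(\<lambda>s. Gx t (W x0 t s) (Y s)) \<in> borel_measurable M"
    using Gx_meas[OF Wm Ym] by (simp add: Dt_def)
  have FWm: "(\<lambda>s. F (W x0 t s)) \<in> borel_measurable M" using measurable_compose[OF Wm F_meas] by (simp add: o_def)
  have gWm: "(\<lambda>s. gradient F (W x0 t s)) \<in> borel_measurable M" using measurable_compose[OF Wm gradF_meas] by (simp add: o_def)
  have intD: "integrable M (\<lambda>s. F (W x0 t s) - fs)" using intF by auto
  show intg: "integrable M (\<lambda>s. (norm (gradient F (W x0 t s)))\<^sup>2)"
  proof (rule integrable_by_bound)
    show "integrable M (\<lambda>s. 2 * Lt * (F (W x0 t s) - fs))" using intD by auto
    show "(\<lambda>s. (norm (gradient F (W x0 t s)))\<^sup>2) \<in> borel_measurable M" using gWm by measurable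
    show "\<bar>(norm (gradient F (W x0 t s)))\<^sup>2\<bar> \<le> 2 * Lt * (F (W x0 t s) - fs)" for s
      using gradF_sq by simp
  qed
  let ?PB = "PiM Bt (\<lambda>_. S)" and ?PD = "PiM Dt (\<lambda>_. S)"
  have xf: "(\<lambda>w. xd x0 t (fst w)) \<in> borel_measurable (?PB \<Otimes>\<^sub>M ?PD)"
    by (rule measurable_compose[OF measurable_fst xdm])
  have Gpm: "(\<lambda>w. Gx t (xd x0 t (fst w)) (snd w)) \<in> borel_measurable (?PB \<Otimes>\<^sub>M ?PD)"
    using Gx_meas[OF xf measurable_snd] by (simp add: Dt_def)
  have Fpm: "(\<lambda>w. F (xd x0 t (fst w))) \<in> borel_measurable (?PB \<Otimes>\<^sub>M ?PD)"
    using measurable_compose[OF xf F_meas] by (simp add: o_def)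
  have gpm: "(\<lambda>w. gradient F (xd x0 t (fst w))) \<in> borel_measurable (?PB \<Otimes>\<^sub>M ?PD)"
    using measurable_compose[OF xf gradF_meas] by (simp add: o_def)
  have intG: "integrable M (\<lambda>s. (norm (Gx t (W x0 t s) (Y s)))\<^sup>2)"
  proof (rule integrableI_bounded)
    show "(\<lambda>s. (norm (Gx t (W x0 t s) (Y s)))\<^sup>2) \<in> borel_measurable M" using Gm by measurable
    define h where "h w = ennreal ((norm (Gx t (xd x0 t (fst w)) (snd w)))\<^sup>2)" for w
    have hm: "h \<in> borel_measurable (?PB \<Otimes>\<^sub>M ?PD)" unfolding h_def using Gpm by measurable
    have "(\<integral>\<^sup>+s. ennreal (norm ((norm (Gx t (W x0 t s) (Y s)))\<^sup>2)) \<partial>M) = (\<integral>\<^sup>+s. h (Z s, Y s) \<partial>M)"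
      unfolding h_def WZ by simp
    also have "\<dots> = (\<integral>\<^sup>+s. (\<integral>\<^sup>+s'. h (Z s, Y s') \<partial>M) \<partial>M)"
      by (rule indep_nn_fubini[OF M_prob ind hm])
    also have "\<dots> \<le> (\<integral>\<^sup>+s. ennreal (KK * (F (W x0 t s) - fs)) \<partial>M)"
    proof (rule nn_integral_mono)
      fix s
      have Yeq: "Y s' = restrict (\<lambda>j. \<xi>' j s') ({..<n} \<times> {t})" for s' unfolding Y_def Dt_def ..
      have "(\<integral>\<^sup>+s'. h (Z s, Y s') \<partial>M) = (\<integral>\<^sup>+s'. ennreal ((norm (Gx t (W x0 t s) (restrict (\<lambda>j. \<xi>' j s') ({..<n} \<times> {t}))))\<^sup>2) \<partial>M)"
        unfolding h_def WZ Yeq by simp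
      also have "\<dots> = ennreal (\<integral>s'. (norm (Gx t (W x0 t s) (restrict (\<lambda>j. \<xi>' j s') ({..<n} \<times> {t}))))\<^sup>2 \<partial>M)"
        by (rule nn_integral_eq_integral[OF Gsq_bound(2)]) simp
      also have "\<dots> \<le> ennreal (KK * (F (W x0 t s) - fs))"
        by (rule ennreal_leI[OF Gsq_bound(1)])
      finally show "(\<integral>\<^sup>+s'. h (Z s, Y s') \<partial>M) \<le> ennreal (KK * (F (W x0 t s) - fs))" .
    qed
    also have "\<dots> = ennreal (\<integral>s. KK * (F (W x0 t s) - fs) \<partial>M)"
      using intD F_lb KK_nonneg by (intro nn_integral_eq_integral) auto
    also have "\<dots> < \<infinity>" by simp
    finally show "(\<integral>\<^sup>+s. ennreal (norm ((norm (Gx t (W x0 t s) (Y s)))\<^sup>2)) \<partial>M) < \<infinity>" .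
  qed
  have intIP: "integrable M (\<lambda>s. gradient F (W x0 t s) \<bullet> Gx t (W x0 t s) (Y s))"
  proof (rule integrable_by_bound)
    show "integrable M (\<lambda>s. (norm (gradient F (W x0 t s)))\<^sup>2 + (norm (Gx t (W x0 t s) (Y s)))\<^sup>2)"
      using intg intG by auto
    show "(\<lambda>s. gradient F (W x0 t s) \<bullet> Gx t (W x0 t s) (Y s)) \<in> borel_measurable M"
      using gWm Gm by measurable
    show "\<bar>gradient F (W x0 t s) \<bullet> Gx t (W x0 t s) (Y s)\<bar> \<le> (norm (gradient F (W x0 t s)))\<^sup>2 + (norm (Gx t (W x0 t s) (Y s)))\<^sup>2" for s
      by (rule inner_sq_bound)
  qed
  have intU: "integrable M (\<lambda>s. U t (W x0 t s) (Y s))"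
    unfolding U_def
    by (intro Bochner_Integration.integrable_add Bochner_Integration.integrable_diff integrable_mult_right intF intIP intG)
  have W1m: "(\<lambda>s. W x0 (Suc t) s) \<in> borel_measurable M"
    unfolding WS using Wm Gm by measurable
  have FW1m: "(\<lambda>s. F (W x0 (Suc t) s)) \<in> borel_measurable M"
    using measurable_compose[OF W1m F_meas] by (simp add: o_def)
  have W1U: "fs \<le> F (W x0 (Suc t) s) \<and> F (W x0 (Suc t) s) \<le> U t (W x0 t s) (Y s)" for s
    unfolding WS using F_lb U_descent by blast
  show intF1: "integrable M (\<lambda>s. F (W x0 (Suc t) s))"
  proof (rule integrable_by_bound)
    show "integrable M (\<lambda>s. \<bar>U t (W x0 t s) (Y s)\<bar> + \<bar>fs\<bar>)" using intU by auto
    show "\<bar>F (W x0 (Suc t) s)\<bar> \<le> \<bar>U t (W x0 t s) (Y s)\<bar> + \<bar>fs\<bar>" for s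
      using W1U[of s] by linarith
  qed (rule FW1m)
  define h where "h w = U t (xd x0 t (fst w)) (snd w)" for w
  have hm: "h \<in> borel_measurable (?PB \<Otimes>\<^sub>M ?PD)"
    unfolding h_def U_def using Fpm gpm Gpm by measurable
  have hZY: "(\<lambda>s. h (Z s, Y s)) = (\<lambda>s. U t (W x0 t s) (Y s))" unfolding h_def WZ by simp
  note fub = indep_int_fubini[OF M_prob ind hm, unfolded hZY, OF intU]
  have inner_le: "(\<integral>s'. h (Z s, Y s') \<partial>M) \<le> Bd (W x0 t s)" for s
  proof -
    have Yeq: "Y s' = restrict (\<lambda>j. \<xi>' j s') ({..<n} \<times> {t})" for s' unfolding Y_def Dt_def ..
    have "(\<integral>s'. h (Z s, Y s') \<partial>M) = (\<integral>s'. U t (W x0 t s) (restrict (\<lambda>j. \<xi>' j s') ({..<n} \<times> {t})) \<partial>M)"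
      unfolding h_def WZ Yeq by simp
    also have "\<dots> \<le> Bd (W x0 t s)" by (rule U_inner(2))
    finally show ?thesis .
  qed
  have intBd: "integrable M (\<lambda>s. Bd (W x0 t s))"
    unfolding Bd_def
    by (intro Bochner_Integration.integrable_add Bochner_Integration.integrable_diff integrable_mult_right intF intg integrable_const)
  have "(\<integral>s. F (W x0 (Suc t) s) \<partial>M) \<le> (\<integral>s. U t (W x0 t s) (Y s) \<partial>M)"
    using W1U by (intro integral_mono intF1 intU) auto
  also have "\<dots> = (\<integral>s. (\<integral>s'. h (Z s, Y s') \<partial>M) \<partial>M)" by (rule fub(2))
  also have "\<dots> \<le> (\<integral>s. Bd (W x0 t s) \<partial>M)"
    using inner_le by (intro integral_mono fub(1) intBd) auto
  also have "(\<integral>s. Bd (W x0 t s) \<partial>M) = (\<integral>s. F (W x0 t s) \<partial>M) - \<gamma> / 2 * (\<integral>s. (norm (gradient F (W x0 t s)))\<^sup>2 \<partial>M)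
      + cc * ((\<integral>s. F (W x0 t s) \<partial>M) - fs)"
  proof -
    have i1: "integrable M (\<lambda>s. \<gamma> / 2 * (norm (gradient F (W x0 t s)))\<^sup>2)" by (intro integrable_mult_right intg)
    have i2: "integrable M (\<lambda>s. cc * (F (W x0 t s) - fs))" by (intro integrable_mult_right intD)
    have "(\<integral>s. Bd (W x0 t s) \<partial>M) = (\<integral>s. F (W x0 t s) - \<gamma> / 2 * (norm (gradient F (W x0 t s)))\<^sup>2 \<partial>M)
        + (\<integral>s. cc * (F (W x0 t s) - fs) \<partial>M)"
      unfolding Bd_def by (rule Bochner_Integration.integral_add) (intro Bochner_Integration.integrable_diff intF i1, rule i2)
    also have "(\<integral>s. F (W x0 t s) - \<gamma> / 2 * (norm (gradient F (W x0 t s)))\<^sup>2 \<partial>M)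
        = (\<integral>s. F (W x0 t s) \<partial>M) - (\<integral>s. \<gamma> / 2 * (norm (gradient F (W x0 t s)))\<^sup>2 \<partial>M)"
      by (rule Bochner_Integration.integral_diff[OF intF i1])
    also have "(\<integral>s. \<gamma> / 2 * (norm (gradient F (W x0 t s)))\<^sup>2 \<partial>M) = \<gamma> / 2 * (\<integral>s. (norm (gradient F (W x0 t s)))\<^sup>2 \<partial>M)"
      by (rule integral_mult_right_zero)
    also have "(\<integral>s. cc * (F (W x0 t s) - fs) \<partial>M) = cc * (\<integral>s. F (W x0 t s) - fs \<partial>M)"
      by (rule integral_mult_right_zero)
    also have "(\<integral>s. F (W x0 t s) - fs \<partial>M) = (\<integral>s. F (W x0 t s) \<partial>M) - fs"
      using Bochner_Integration.integral_diff[OF intF integrable_const[of fs]] by (simp add: prob_space)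
    finally show ?thesis .
  qed
  finally show "(\<integral>s. F (W x0 (Suc t) s) \<partial>M) - fs \<le> (1 + cc) * ((\<integral>s. F (W x0 t s) \<partial>M) - fs)
           - \<gamma> / 2 * (\<integral>s. (norm (gradient F (W x0 t s)))\<^sup>2 \<partial>M)"
    by (simp add: algebra_simps)
qed

lemma W_dcgd: "dcgd n f xs \<alpha> (\<gamma>0 / \<alpha>\<^sup>2) Q \<xi> x0 t s = W x0 t s"
proof -
  have "(\<lambda>(i, u). \<xi> i u s) = (\<lambda>j. \<xi>' j s)"
    by (rule ext) (simp add: \<xi>'_def split: prod.split)
  then show ?thesis unfolding W_def dcgd_eq by simp
qed

end

theorem corollary5:
  fixes n :: nat
    and f :: "nat \<Rightarrow> real^'d \<Rightarrow> real"
    and L :: "nat \<Rightarrow> real"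
    and xs :: "nat \<Rightarrow> real^'d"
    and \<alpha> \<omega> \<gamma>0 :: real
    and M :: "'a measure"
    and S :: "'b measure"
    and \<xi> :: "nat \<Rightarrow> nat \<Rightarrow> 'a \<Rightarrow> 'b"
    and Q :: "nat \<Rightarrow> nat \<Rightarrow> 'b \<Rightarrow> real^'d \<Rightarrow> real^'d"
    and x0 :: "real^'d"
    and k :: nat
  assumes n_pos: "n \<ge> 1"
    and smooth: "\<forall>i<n. L_smooth (L i) (f i)"
    and min_exists: "\<forall>i<n. \<exists>z. \<forall>y. f i z \<le> f i y"
    and stationary: "\<forall>i<n. gradient (f i) (xs i) = 0"
    and alpha: "0 < \<alpha>" "\<alpha> < 1"
    and omega: "\<omega> \<ge> 0"
    and M_prob: "prob_space M"
    and indep: "prob_space.indep_vars M (\<lambda>_. S) (\<lambda>(i, t). \<xi> i t) ({..<n} \<times> UNIV)"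
    and Q_meas: "\<forall>i<n. \<forall>t. (\<lambda>(b, x). Q i t b x) \<in> borel_measurable (S \<Otimes>\<^sub>M borel)"
    and compress: "\<forall>i<n. \<forall>t. in_B M \<omega> (\<lambda>s. Q i t (\<xi> i t s))"
    and gamma0: "0 < \<gamma>0"
    and stepsize: "(\<gamma>0 / \<alpha>\<^sup>2) * ((1 / real n) * (\<Sum>i<n. L i)) * \<alpha>\<^sup>2 \<le> 1"
    and Delta_fin: "bdd_above ((\<lambda>a. ftilde n f xs a x0 - (1 / real n) * (\<Sum>i<n. INF y. f i y)) ` {0<..<1})"
    and k_pos: "k \<ge> 1"
  shows "(MIN t\<in>{0..k-1}. integral\<^sup>L M (\<lambda>s. (norm (gradient (ftilde n f xs \<alpha>)
              (dcgd n f xs \<alpha> (\<gamma>0 / \<alpha>\<^sup>2) Q \<xi> x0 t s)))\<^sup>2))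
         \<le> \<alpha>\<^sup>2 * (2 * (1 + 2 * ((1 / real n) * (\<Sum>i<n. L i)) * \<omega> * \<gamma>0\<^sup>2 * Max (L ` {..<n}) / real n) ^ k
              / (\<gamma>0 * real k))
           * (SUP a\<in>{0<..<1}. ftilde n f xs a x0 - (1 / real n) * (\<Sum>i<n. INF y. f i y))"
proof -
  interpret dsetup n f L xs \<alpha> \<omega> \<gamma>0 M S \<xi> Q
    by (rule dsetup.intro; fact)
  define R where "R = 1 + 2 * ((1 / real n) * (\<Sum>i<n. L i)) * \<omega> * \<gamma>0\<^sup>2 * Max (L ` {..<n}) / real n"
  define e where "e t = (\<integral>s. F (W x0 t s) \<partial>M) - fs" for t
  define G where "G t = (\<integral>s. (norm (gradient F (W x0 t s)))\<^sup>2 \<partial>M)" for t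
  have intF: "integrable M (\<lambda>s. F (W x0 t s))" for t
  proof (induction t)
    case 0 then show ?case by (simp add: W_def)
  next
    case (Suc t) then show ?case by (rule main_step(2))
  qed
  have e0: "e t \<ge> 0" for t
  proof -
    have "(\<integral>s. fs \<partial>M) \<le> (\<integral>s. F (W x0 t s) \<partial>M)"
      using F_lb by (intro integral_mono intF) auto
    then show ?thesis unfolding e_def by (simp add: prob_space)
  qed
  have G0: "G t \<ge> 0" for t unfolding G_def by (rule integral_nonneg_AE) auto
  have cc_nonneg: "cc \<ge> 0"
  proof -
    have "Lmax \<ge> 0" using Lmax_ge[of 0] L_nonneg[of 0] n_pos by simp
    then show ?thesis unfolding cc_def using Lbar_nonneg omega by simp
  qed
  have "R = 1 + 2 * cc"
    unfolding R_def cc_def Lbar_def Lmax_def by (simp add: algebra_simps)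
  then have ccR: "1 + cc \<le> R" using cc_nonneg by simp
  have step: "e (Suc t) \<le> R * e t - \<gamma> / 2 * G t" for t
  proof -
    have "e (Suc t) \<le> (1 + cc) * e t - \<gamma> / 2 * G t"
      using main_step(3)[OF intF] unfolding e_def G_def .
    also have "(1 + cc) * e t \<le> R * e t" using ccR e0[of t] by (intro mult_right_mono) auto
    finally show ?thesis by simp
  qed
  have R1: "R \<ge> 1" using ccR cc_nonneg by simp
  have bound: "(MIN t\<in>{0..k-1}. G t) \<le> 2 * R ^ k * e 0 / (\<gamma> * real k)"
    using seq_bound[of R \<gamma> e G k] R1 gamma_pos e0 step k_pos G0 by blast
  have lhs: "(\<lambda>t. integral\<^sup>L M (\<lambda>s. (norm (gradient (ftilde n f xs \<alpha>)
              (dcgd n f xs \<alpha> (\<gamma>0 / \<alpha>\<^sup>2) Q \<xi> x0 t s)))\<^sup>2)) = G"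
    unfolding G_def W_dcgd F_def ..
  have e0D: "e 0 \<le> (SUP a\<in>{0<..<1}. ftilde n f xs a x0 - (1 / real n) * (\<Sum>i<n. INF y. f i y))"
  proof -
    have "e 0 = ftilde n f xs \<alpha> x0 - (1 / real n) * (\<Sum>i<n. INF y. f i y)"
      unfolding e_def W_def F_def fs_def by (simp add: prob_space)
    also have "\<dots> \<le> (SUP a\<in>{0<..<1}. ftilde n f xs a x0 - (1 / real n) * (\<Sum>i<n. INF y. f i y))"
      using alpha Delta_fin by (intro cSUP_upper) auto
    finally show ?thesis .
  qed
  have "2 * R ^ k * e 0 / (\<gamma> * real k) = \<alpha>\<^sup>2 * (2 * R ^ k / (\<gamma>0 * real k)) * e 0"
    unfolding \<gamma>_def using alpha by (simp add: field_simps)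
  also have "\<dots> \<le> \<alpha>\<^sup>2 * (2 * R ^ k / (\<gamma>0 * real k)) * (SUP a\<in>{0<..<1}. ftilde n f xs a x0 - (1 / real n) * (\<Sum>i<n. INF y. f i y))"
    using e0D R1 gamma0 by (intro mult_left_mono) auto
  finally show ?thesis using bound unfolding lhs R_def by simp
qed


end
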